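(* For every integer $n\ge 2$ and every real $x>0$, $$\bigl(\psi_2^{(n)}(x+1)\bigr)^2\le \psi_2^{(n)}(x)\,\psi_2^{(n)}(x+2).$$
   Context: For an integer $n\ge 2$ and $x>0$, the poly-double gamma function is defined by $$\psi_2^{(n)}(x)=(-1)^{n+1}\,n!\sum_{k=0}^{\infty}\frac{1+k}{(x+k)^{n+1}} .$$ *)

theory Defs
  imports Complex_Main
begin

definition poly_double_gamma :: "nat \<Rightarrow> real \<Rightarrow> real" where
  "poly_double_gamma n x =
     (-1) ^ (n + 1) * fact n * (\<Sum>k. (1 + real k) / (x + real k) ^ (n + 1))"

end

theory Submission
  imports Defs "HOL-Analysis.Analysis"
begin

lemma cs_finite:
  fixes a b c :: "nat \<Rightarrow> real"
  assumes "\<And>k. 0 \<le> a k" "\<And>k. 0 \<le> b k" "\<And>k. 0 \<le> c k" "\<And>k. (a k)^2 \<le> b k * c k"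
  shows "(\<Sum>k<N. a k)^2 \<le> (\<Sum>k<N. b k) * (\<Sum>k<N. c k)"
proof (induction N)
  case 0
  then show ?case by simp
next
  case (Suc N)
  define A where "A = (\<Sum>k<N. a k)"
  define B where "B = (\<Sum>k<N. b k)"
  define C where "C = (\<Sum>k<N. c k)"
  have A0: "A \<ge> 0" unfolding A_def by (intro sum_nonneg assms)
  have B0: "B \<ge> 0" unfolding B_def by (intro sum_nonneg assms)
  have C0: "C \<ge> 0" unfolding C_def by (intro sum_nonneg assms)
  have IH: "A^2 \<le> B * C" using Suc.IH unfolding A_def B_def C_def .
  have a0: "a N \<ge> 0" "b N \<ge> 0" "c N \<ge> 0" using assms by auto
  have sq: "(2 * A * a N)^2 \<le> (B * c N + b N * C)^2"
  proof -
    have "(2 * A * a N)^2 = 4 * A^2 * (a N)^2" by (simp add: power_mult_distrib)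
    also have "\<dots> \<le> 4 * (B * C) * (b N * c N)"
      using IH assms(4)[of N] by (intro mult_mono mult_left_mono) (auto simp: A0 B0 C0)
    also have "\<dots> \<le> (B * c N + b N * C)^2"
      using sum_squares_ge_zero[of "B * c N - b N * C" 0]
      by (simp add: power2_eq_square algebra_simps)
    finally show ?thesis .
  qed
  have "2 * A * a N \<le> B * c N + b N * C"
    using B0 C0 a0 by (intro power2_le_imp_le[OF sq] add_nonneg_nonneg mult_nonneg_nonneg) auto
  then have "(A + a N)^2 \<le> (B + b N) * (C + c N)"
  proof -
    have e1: "(A + a N)^2 = A^2 + 2 * A * a N + (a N)^2" by (simp add: power2_sum)
    have e2: "(B + b N) * (C + c N) = B * C + (B * c N + b N * C) + b N * c N"
      by (simp add: algebra_simps)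
    show ?thesis unfolding e1 e2 using IH assms(4)[of N] \<open>2 * A * a N \<le> B * c N + b N * C\<close>
      by linarith
  qed
  then show ?case unfolding A_def B_def C_def by simp
qed

lemma cs_series:
  fixes a b c :: "nat \<Rightarrow> real"
  assumes "\<And>k. 0 \<le> a k" "\<And>k. 0 \<le> b k" "\<And>k. 0 \<le> c k" "\<And>k. (a k)^2 \<le> b k * c k"
    and "summable a" "summable b" "summable c"
  shows "(suminf a)^2 \<le> suminf b * suminf c"
proof (rule LIMSEQ_le)
  show "(\<lambda>N. (\<Sum>k<N. a k)^2) \<longlonglongrightarrow> (suminf a)^2"
    by (intro tendsto_power summable_LIMSEQ assms)
  show "(\<lambda>N. (\<Sum>k<N. b k) * (\<Sum>k<N. c k)) \<longlonglongrightarrow> suminf b * suminf c"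
    by (intro tendsto_mult summable_LIMSEQ assms)
  show "\<exists>N. \<forall>n\<ge>N. (\<Sum>k<n. a k)^2 \<le> (\<Sum>k<n. b k) * (\<Sum>k<n. c k)"
    by (intro exI[of _ 0] allI impI cs_finite assms)
qed

lemma term_summable:
  fixes y :: real and m :: nat
  assumes "y > 0" "m \<ge> 3"
  shows "summable (\<lambda>k. (1 + real k) / (y + real k) ^ m)"
proof (rule summable_comparison_test')
  show "summable (\<lambda>k. 2 * inverse (real k ^ 2))"
    by (intro summable_mult inverse_power_summable) simp
  fix k :: nat assume k: "k \<ge> 1"
  have yk: "y + real k \<ge> 1" using k assms by simp
  have "(y + real k) ^ 3 \<le> (y + real k) ^ m"
    using yk assms by (intro power_increasing) auto
  moreover have "(y + real k) ^ 3 > 0" using yk by simp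
  ultimately have "(1 + real k) / (y + real k) ^ m \<le> (1 + real k) / (y + real k) ^ 3"
    by (intro divide_left_mono) auto
  also have "\<dots> \<le> 2 * (y + real k) / (y + real k) ^ 3"
    using k assms \<open>(y + real k) ^ 3 > 0\<close> by (intro divide_right_mono) auto
  also have "\<dots> = 2 / (y + real k) ^ 2"
  proof -
    have tl: "t \<noteq> 0 \<Longrightarrow> 2 * t / t ^ 3 = 2 / t ^ 2" for t :: real
      by (simp add: eval_nat_numeral field_simps)
    show ?thesis by (rule tl) (use yk in simp)
  qed
  also have "\<dots> \<le> 2 / (real k) ^ 2"
    using k assms by (intro divide_left_mono power_mono mult_pos_pos) auto
  finally show "norm ((1 + real k) / (y + real k) ^ m) \<le> 2 * inverse (real k ^ 2)"
    using yk by (simp add: divide_inverse)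
qed

theorem corollary2p2:
  fixes n :: nat and x :: real
  assumes "n \<ge> 2" and "x > 0"
  shows "(poly_double_gamma n (x + 1))\<^sup>2 \<le> poly_double_gamma n x * poly_double_gamma n (x + 2)"
proof -
  define S where "S y = (\<Sum>k. (1 + real k) / (y + real k) ^ (n + 1))" for y
  have sm0: "summable (\<lambda>k. (1 + real k) / (x + real k) ^ (n + 1))"
    using assms by (intro term_summable) auto
  have sm1: "summable (\<lambda>k. (1 + real k) / (x + 1 + real k) ^ (n + 1))"
    using assms by (intro term_summable) auto
  have sm2: "summable (\<lambda>k. (1 + real k) / (x + 2 + real k) ^ (n + 1))"
    using assms by (intro term_summable) auto
  have key: "(S (x + 1))^2 \<le> S x * S (x + 2)"
    unfolding S_def
  proof (rule cs_series)
    fix k :: nat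
    have p: "x + real k > 0" using assms by simp
    show "0 \<le> (1 + real k) / (x + 1 + real k) ^ (n + 1)" using p by simp
    show "0 \<le> (1 + real k) / (x + real k) ^ (n + 1)" using p by simp
    show "0 \<le> (1 + real k) / (x + 2 + real k) ^ (n + 1)" using p by simp
    define u where "u = x + real k"
    have u: "u > 0" using p u_def by simp
    have le: "u * (u + 2) \<le> (u + 1)^2" by (simp add: power2_eq_square algebra_simps)
    have le2: "(u * (u + 2)) ^ (n + 1) \<le> ((u + 1)^2) ^ (n + 1)"
      using le u by (intro power_mono) auto
    have pos: "(u * (u + 2)) ^ (n + 1) > 0" using u by simp
    have "((1 + real k) / (u + 1) ^ (n + 1))^2 = (1 + real k)^2 / ((u + 1)^2) ^ (n + 1)"
    proof -
      have "((u + 1) ^ (n + 1))^2 = ((u + 1)^2) ^ (n + 1)"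
        by (simp only: power_mult[symmetric] mult.commute)
      then show ?thesis by (simp add: power_divide)
    qed
    also have "\<dots> \<le> (1 + real k)^2 / (u * (u + 2)) ^ (n + 1)"
      using le2 pos by (intro divide_left_mono) auto
    also have "\<dots> = (1 + real k) / u ^ (n + 1) * ((1 + real k) / (u + 2) ^ (n + 1))"
      by (simp add: power_mult_distrib power2_eq_square)
    finally show "((1 + real k) / (x + 1 + real k) ^ (n + 1))^2
      \<le> (1 + real k) / (x + real k) ^ (n + 1) * ((1 + real k) / (x + 2 + real k) ^ (n + 1))"
      unfolding u_def by (simp add: add_ac)
  qed (fact sm0 sm1 sm2)+
  have pdg: "poly_double_gamma n y = (-1) ^ (n + 1) * fact n * S y" for y
    unfolding poly_double_gamma_def S_def ..
  have "(poly_double_gamma n (x + 1))\<^sup>2 = (fact n)^2 * (S (x + 1))^2"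
  proof -
    have sq1: "((-1::real) ^ (n + 1))^2 = 1"
      by (simp add: power2_eq_square power_mult_distrib[symmetric])
    show ?thesis unfolding pdg power_mult_distrib sq1 by simp
  qed
  also have "\<dots> \<le> (fact n)^2 * (S x * S (x + 2))"
    using key by (intro mult_left_mono) auto
  also have "\<dots> = poly_double_gamma n x * poly_double_gamma n (x + 2)"
    unfolding pdg by (simp add: power2_eq_square algebra_simps)
  finally show ?thesis .
qed

end
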